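(* Let $m\ge3$ be odd and $n\ge2$. Suppose $\mathcal{A}=\sum_{l=1}^r(\mathbf{u}^{(l)})^m$ is a strongly completely positive tensor in which every vector $\mathbf{u}^{(1)},\dots,\mathbf{u}^{(r)}\in\mathbb{R}^n$ is positive (all components $>0$). Then $\mathcal{A}$ is strongly positive definite.
   Context: For $\mathbf{u}\in\mathbb{R}^n$, $\mathbf{u}^m$ is the tensor with entries $u_{i_1}\cdots u_{i_m}$. A tensor $\mathcal{A}=\sum_{l=1}^r(\mathbf{u}^{(l)})^m$ with nonnegative $\mathbf{u}^{(l)}$ is completely positive; it is strongly completely positive if moreover $r\ge n$ and $\{\mathbf{u}^{(1)},\dots,\mathbf{u}^{(r)}\}$ spans $\mathbb{R}^n$. For $\mathbf{x}\in\mathbb{R}^n$, $\mathcal{A}\mathbf{x}^{m-1}$ is the vector with $i$th component $\sum_{i_2,\dots,i_m}a_{ii_2\dots i_m}x_{i_2}\cdots x_{i_m}$. For odd $m$ and symmetric $\mathcal{A}$, $\mathcal{A}$ is strongly positive definite if $\mathcal{A}\mathbf{x}^{m-1}>\mathbf{0}$ componentwise for all nonzero $\mathbf{x}\in\mathbb{R}^n$. *)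

theory Defs
  imports "HOL-Analysis.Analysis" "HOL-Library.Multiset"
begin

text \<open>A real tensor of order m on R^n is modelled as a function on index lists
  over the finite index type 'n; only lists of length m are relevant.\<close>

type_synonym 'n tensor = "'n list \<Rightarrow> real"

definition tensor_power :: "real ^ 'n \<Rightarrow> 'n tensor" where
  "tensor_power u = (\<lambda>is. prod_list (map (\<lambda>i. u $ i) is))"

definition sym_tensor :: "nat \<Rightarrow> 'n tensor \<Rightarrow> bool" where
  "sym_tensor m A \<longleftrightarrow> (\<forall>is js. length is = m \<and> mset js = mset is \<longrightarrow> A js = A is)"

definition tensor_apply :: "nat \<Rightarrow> 'n::finite tensor \<Rightarrow> real ^ 'n \<Rightarrow> real ^ 'n" where
  "tensor_apply m A x = (\<chi> i. \<Sum>is\<in>{is. length is = m - 1}. A (i # is) * prod_list (map (\<lambda>j. x $ j) is))"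

definition strongly_completely_positive_decomp ::
    "nat \<Rightarrow> 'n::finite tensor \<Rightarrow> nat \<Rightarrow> (nat \<Rightarrow> real ^ 'n) \<Rightarrow> bool" where
  "strongly_completely_positive_decomp m A r U \<longleftrightarrow>
     (\<forall>is. length is = m \<longrightarrow> A is = (\<Sum>l<r. tensor_power (U l) is)) \<and>
     (\<forall>l<r. \<forall>i. U l $ i \<ge> 0) \<and>
     r \<ge> CARD('n) \<and> span (U ` {..<r}) = UNIV"

definition strongly_positive_definite :: "nat \<Rightarrow> 'n::finite tensor \<Rightarrow> bool" where
  "strongly_positive_definite m A \<longleftrightarrow> odd m \<and> sym_tensor m A \<and>
     (\<forall>x. x \<noteq> 0 \<longrightarrow> (\<forall>i. tensor_apply m A x $ i > 0))"

end

theory Submission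
  imports Defs
begin

lemma lists_len_Suc:
  "{is. length is = Suc k} = (\<lambda>(j, is). j # is) ` (UNIV \<times> {is. length is = k})"
  by (auto simp: length_Suc_conv image_iff)

lemma finite_lists_len: "finite {is :: ('n::finite) list. length is = k}"
proof -
  have "{is :: 'n list. length is = k} = {xs. set xs \<subseteq> UNIV \<and> length xs = k}" by auto
  then show ?thesis using finite_lists_length_eq[of "UNIV :: 'n set" k] by simp
qed

lemma prod_list_map_mult2:
  "prod_list (map (\<lambda>j. (f j :: real) * g j) xs) = prod_list (map f xs) * prod_list (map g xs)"
  by (induction xs) (auto simp: algebra_simps)

lemma sum_lists_prod:
  fixes f :: "'n::finite \<Rightarrow> real"
  shows "(\<Sum>is\<in>{is. length is = k}. prod_list (map f is)) = (\<Sum>j\<in>UNIV. f j) ^ k"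
proof (induction k)
  case 0
  have "{is :: 'n list. length is = 0} = {[]}" by auto
  then show ?case by simp
next
  case (Suc k)
  have inj: "inj_on (\<lambda>(j, is). j # is) (UNIV \<times> {is :: 'n list. length is = k})"
    by (auto simp: inj_on_def)
  have "(\<Sum>is\<in>{is. length is = Suc k}. prod_list (map f is))
      = (\<Sum>p\<in>UNIV \<times> {is. length is = k}. prod_list (map f ((\<lambda>(j, is). j # is) p)))"
    unfolding lists_len_Suc by (subst sum.reindex[OF inj]) (simp add: comp_def)
  also have "\<dots> = (\<Sum>j\<in>UNIV. \<Sum>is\<in>{is. length is = k}. f j * prod_list (map f is))"
    by (simp add: sum.cartesian_product split_def)
  also have "\<dots> = (\<Sum>j\<in>UNIV. f j * (\<Sum>j\<in>UNIV. f j) ^ k)"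
    by (simp add: sum_distrib_left[symmetric] Suc.IH)
  also have "\<dots> = (\<Sum>j\<in>UNIV. f j) ^ Suc k"
    by (simp add: sum_distrib_right[symmetric])
  finally show ?case .
qed

theorem corollary3p5:
  fixes A :: "'n::finite tensor" and U :: "nat \<Rightarrow> real ^ 'n" and m r :: nat
  assumes "odd m" and "m \<ge> 3" and "CARD('n) \<ge> 2"
    and "strongly_completely_positive_decomp m A r U"
    and "\<forall>l<r. \<forall>i. U l $ i > 0"
  shows "strongly_positive_definite m A"
proof -
  from assms(4) have Adef: "\<And>is. length is = m \<Longrightarrow> A is = (\<Sum>l<r. tensor_power (U l) is)"
    and spanU: "span (U ` {..<r}) = UNIV"
    unfolding strongly_completely_positive_decomp_def by auto
  have sym: "sym_tensor m A"
    unfolding sym_tensor_def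
  proof (intro allI impI)
    fix "is" js :: "'n list"
    assume h: "length is = m \<and> mset js = mset is"
    then have "length js = m" by (metis size_mset)
    moreover have "tensor_power (U l) js = tensor_power (U l) is" for l
      unfolding tensor_power_def using h
      by (metis mset_map prod_mset_prod_list)
    ultimately show "A js = A is" using h Adef by simp
  qed
  have app: "tensor_apply m A x $ i = (\<Sum>l<r. U l $ i * (U l \<bullet> x) ^ (m - 1))" for x i
  proof -
    have "tensor_apply m A x $ i = (\<Sum>is\<in>{is. length is = m - 1}.
        \<Sum>l<r. U l $ i * prod_list (map (\<lambda>j. U l $ j * x $ j) is))"
      unfolding tensor_apply_def vec_lambda_beta
    proof (rule sum.cong[OF refl])
      fix "is" :: "'n list" assume "is \<in> {is. length is = m - 1}"
      then have "length (i # is) = m" using assms(2) by simp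
      then have "A (i # is) = (\<Sum>l<r. tensor_power (U l) (i # is))" by (rule Adef)
      then show "A (i # is) * prod_list (map (\<lambda>j. x $ j) is) =
          (\<Sum>l<r. U l $ i * prod_list (map (\<lambda>j. U l $ j * x $ j) is))"
        by (simp add: tensor_power_def sum_distrib_right prod_list_map_mult2 mult.assoc)
    qed
    also have "\<dots> = (\<Sum>l<r. U l $ i * (\<Sum>is\<in>{is. length is = m - 1}.
        prod_list (map (\<lambda>j. U l $ j * x $ j) is)))"
      by (subst sum.swap) (simp add: sum_distrib_left)
    also have "\<dots> = (\<Sum>l<r. U l $ i * (U l \<bullet> x) ^ (m - 1))"
      by (simp add: sum_lists_prod inner_vec_def)
    finally show ?thesis .
  qed
  have pos: "tensor_apply m A x $ i > 0" if "x \<noteq> 0" for x i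
  proof -
    have "\<exists>l<r. U l \<bullet> x \<noteq> 0"
    proof (rule ccontr)
      assume "\<not> ?thesis"
      then have "\<And>y. y \<in> U ` {..<r} \<Longrightarrow> orthogonal x y"
        by (auto simp: orthogonal_def inner_commute)
      then have "orthogonal x x" using orthogonal_to_span spanU by blast
      then show False using that by (simp add: orthogonal_def)
    qed
    then obtain l where l: "l < r" "U l \<bullet> x \<noteq> 0" by blast
    have ev: "even (m - 1)" using assms(1,2) by simp
    show ?thesis unfolding app
    proof (rule sum_pos2[of "{..<r}" l])
      show "0 < U l $ i * (U l \<bullet> x) ^ (m - 1)"
        using l assms(5) ev by (simp add: zero_less_power_eq)
      show "\<And>j. j \<in> {..<r} \<Longrightarrow> 0 \<le> U j $ i * (U j \<bullet> x) ^ (m - 1)"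
        using assms(5) ev by (simp add: less_imp_le zero_le_even_power)
    qed (use l in auto)
  qed
  show ?thesis unfolding strongly_positive_definite_def using assms(1) sym pos by blast
qed

end
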